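(* Fix $\alpha\in[0,1)$. Let $M=(r,q,u)$ be a floor-randomized, left-continuous mechanism satisfying DD. If $M$ is dominated, then there exists a floor-randomized, left-continuous mechanism $M'=(r',q',u')$ satisfying DD that dominates $M$ and satisfies $q'(\theta)r'(\theta)\le q(\theta)r(\theta)$ for all $\theta\in\Theta$.
   Context: Setting. Let $\Theta=[\underline\theta,\overline\theta]$ with $0<\underline\theta<\overline\theta$. Let $c>0$ and let $P:\mathbb R_+\to\mathbb R_+$ be continuous and strictly decreasing with $P(\overline q)=0$ for some $\overline q>0$. Put $V(q)=\int_0^q P(z)\,dz$ and $\mathrm{TS}(\theta,q)=V(q)-c-\theta q$ for $q>0$, $\mathrm{TS}(\theta,0)=0$. Assume (A2): $\mathrm{TS}(\overline\theta,P^{-1}(\overline\theta))>0$. A mechanism is a triple $M=(r,q,u)$ of functions $r:\Theta\to[0,1]$, $q:\Theta\to[0,\overline q]$, $u:\Theta\to\mathbb R$ with $q(\theta)=0$ if and only if $r(\theta)=0$. It is IC if $u(\theta)\ge u(\theta')+(\theta'-\theta)q(\theta')r(\theta')$ for all $\theta,\theta'\in\Theta$, and IR if $u(\theta)\ge 0$ for all $\theta$. (Known fact: $M$ is IC iff $\theta\mapsto q(\theta)r(\theta)$ is nonincreasing and $u(\theta)=u(\overline\theta)+\int_\theta^{\overline\theta}q(z)r(z)\,dz$ for all $\theta$; an IC mechanism is IR iff $u(\overline\theta)\ge0$.) Fix $\alpha\in[0,1)$. The regulator's surplus at $\theta$ is $\mathrm{RS}_\alpha(\theta,M)=r(\theta)\,\mathrm{TS}(\theta,q(\theta))-(1-\alpha)u(\theta)$.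 An IC and IR mechanism $\tilde M$ dominates an IC and IR mechanism $M$ if $\mathrm{RS}_\alpha(\theta,\tilde M)\ge \mathrm{RS}_\alpha(\theta,M)$ for all $\theta\in\Theta$ with strict inequality for some $\theta$; $M$ is undominated if it is IC, IR and not dominated by any IC and IR mechanism. The quantity floor $\hat q$ is the unique $q>0$ with $V(q)-qP(q)=c$. A mechanism $(r,q,u)$ is floor-randomized if it is IC, IR, $u(\overline\theta)=0$, and $\Theta$ can be partitioned into three pairwise disjoint (possibly empty) intervals $\Theta_1,\Theta_{01},\Theta_0$, with every element of $\Theta_0$ larger than every element of $\Theta_{01}$ and every element of $\Theta_{01}$ larger than every element of $\Theta_1$, such that: $q(\theta)\ge\hat q$ and $r(\theta)=1$ for $\theta\in\Theta_1$; $q(\theta)=\hat q$ and $r(\theta)\in(0,1)$ for $\theta\in\Theta_{01}$; $q(\theta)=r(\theta)=0$ for $\theta\in\Theta_0$. The efficient quantity is $q_e(\theta)=P^{-1}(\theta)$. A mechanism satisfies downward distortion (DD) if $q(\theta)\le q_e(\theta)$ for all $\theta$, with equality at $\theta=\underline\theta$. A mechanism is left continuous if $\theta\mapsto q(\theta)r(\theta)$ is left continuous at every $\theta\in(\underline\theta,\overline\theta]$. *)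

theory Defs
  imports "HOL-Analysis.Analysis"
begin

text \<open>Type of parameters: \<Theta> = {tlo..thi}. Mechanisms are triples of real functions,
 only their values on \<Theta> matter.\<close>

definition V :: "(real \<Rightarrow> real) \<Rightarrow> real \<Rightarrow> real" where
  "V P q = integral {0..q} P"

definition TS :: "(real \<Rightarrow> real) \<Rightarrow> real \<Rightarrow> real \<Rightarrow> real \<Rightarrow> real" where
  "TS P c \<theta> q = (if q = 0 then 0 else V P q - c - \<theta> * q)"

definition qfloor :: "(real \<Rightarrow> real) \<Rightarrow> real \<Rightarrow> real" where
  "qfloor P c = (THE q. q > 0 \<and> V P q - q * P q = c)"

definition qeff :: "(real \<Rightarrow> real) \<Rightarrow> real \<Rightarrow> real" where
  "qeff P \<theta> = (THE q. q \<ge> 0 \<and> P q = \<theta>)"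

definition mechanism ::
  "real \<Rightarrow> real \<Rightarrow> real \<Rightarrow> (real \<Rightarrow> real) \<Rightarrow> (real \<Rightarrow> real) \<Rightarrow> (real \<Rightarrow> real) \<Rightarrow> bool" where
  "mechanism tlo thi qbar r q u \<longleftrightarrow>
     (\<forall>\<theta>\<in>{tlo..thi}. 0 \<le> r \<theta> \<and> r \<theta> \<le> 1 \<and> 0 \<le> q \<theta> \<and> q \<theta> \<le> qbar
                    \<and> (q \<theta> = 0 \<longleftrightarrow> r \<theta> = 0))"

definition IC :: "real \<Rightarrow> real \<Rightarrow> (real \<Rightarrow> real) \<Rightarrow> (real \<Rightarrow> real) \<Rightarrow> (real \<Rightarrow> real) \<Rightarrow> bool" where
  "IC tlo thi r q u \<longleftrightarrow>
     (\<forall>\<theta>\<in>{tlo..thi}. \<forall>\<theta>'\<in>{tlo..thi}. u \<theta> \<ge> u \<theta>' + (\<theta>' - \<theta>) * q \<theta>' * r \<theta>')"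

definition IR :: "real \<Rightarrow> real \<Rightarrow> (real \<Rightarrow> real) \<Rightarrow> bool" where
  "IR tlo thi u \<longleftrightarrow> (\<forall>\<theta>\<in>{tlo..thi}. u \<theta> \<ge> 0)"

definition feasible ::
  "real \<Rightarrow> real \<Rightarrow> real \<Rightarrow> (real \<Rightarrow> real) \<Rightarrow> (real \<Rightarrow> real) \<Rightarrow> (real \<Rightarrow> real) \<Rightarrow> bool" where
  "feasible tlo thi qbar r q u \<longleftrightarrow>
     mechanism tlo thi qbar r q u \<and> IC tlo thi r q u \<and> IR tlo thi u"

definition RS ::
  "(real \<Rightarrow> real) \<Rightarrow> real \<Rightarrow> real \<Rightarrow> real \<Rightarrow> (real \<Rightarrow> real) \<Rightarrow> (real \<Rightarrow> real) \<Rightarrow> (real \<Rightarrow> real) \<Rightarrow> real" where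
  "RS P c \<alpha> \<theta> r q u = r \<theta> * TS P c \<theta> (q \<theta>) - (1 - \<alpha>) * u \<theta>"

definition dominates ::
  "real \<Rightarrow> real \<Rightarrow> real \<Rightarrow> (real \<Rightarrow> real) \<Rightarrow> real \<Rightarrow> real \<Rightarrow>
   (real \<Rightarrow> real) \<Rightarrow> (real \<Rightarrow> real) \<Rightarrow> (real \<Rightarrow> real) \<Rightarrow>
   (real \<Rightarrow> real) \<Rightarrow> (real \<Rightarrow> real) \<Rightarrow> (real \<Rightarrow> real) \<Rightarrow> bool" where
  "dominates tlo thi qbar P c \<alpha> r' q' u' r q u \<longleftrightarrow>
     feasible tlo thi qbar r' q' u' \<and> feasible tlo thi qbar r q u \<and>
     (\<forall>\<theta>\<in>{tlo..thi}. RS P c \<alpha> \<theta> r' q' u' \<ge> RS P c \<alpha> \<theta> r q u) \<and>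
     (\<exists>\<theta>\<in>{tlo..thi}. RS P c \<alpha> \<theta> r' q' u' > RS P c \<alpha> \<theta> r q u)"

definition dominated ::
  "real \<Rightarrow> real \<Rightarrow> real \<Rightarrow> (real \<Rightarrow> real) \<Rightarrow> real \<Rightarrow> real \<Rightarrow>
   (real \<Rightarrow> real) \<Rightarrow> (real \<Rightarrow> real) \<Rightarrow> (real \<Rightarrow> real) \<Rightarrow> bool" where
  "dominated tlo thi qbar P c \<alpha> r q u \<longleftrightarrow>
     (\<exists>r' q' u'. dominates tlo thi qbar P c \<alpha> r' q' u' r q u)"

definition interval_set :: "real set \<Rightarrow> bool" where
  "interval_set S \<longleftrightarrow> (\<forall>x\<in>S. \<forall>y\<in>S. \<forall>z. x \<le> z \<and> z \<le> y \<longrightarrow> z \<in> S)"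

definition floor_randomized ::
  "real \<Rightarrow> real \<Rightarrow> real \<Rightarrow> (real \<Rightarrow> real) \<Rightarrow> real \<Rightarrow>
   (real \<Rightarrow> real) \<Rightarrow> (real \<Rightarrow> real) \<Rightarrow> (real \<Rightarrow> real) \<Rightarrow> bool" where
  "floor_randomized tlo thi qbar P c r q u \<longleftrightarrow>
     feasible tlo thi qbar r q u \<and> u thi = 0 \<and>
     (\<exists>T1 T01 T0.
        interval_set T1 \<and> interval_set T01 \<and> interval_set T0 \<and>
        T1 \<inter> T01 = {} \<and> T1 \<inter> T0 = {} \<and> T01 \<inter> T0 = {} \<and>
        T1 \<union> T01 \<union> T0 = {tlo..thi} \<and>
        (\<forall>x\<in>T0. \<forall>y\<in>T01. x > y) \<and> (\<forall>x\<in>T01. \<forall>y\<in>T1. x > y) \<and>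
        (\<forall>\<theta>\<in>T1. q \<theta> \<ge> qfloor P c \<and> r \<theta> = 1) \<and>
        (\<forall>\<theta>\<in>T01. q \<theta> = qfloor P c \<and> 0 < r \<theta> \<and> r \<theta> < 1) \<and>
        (\<forall>\<theta>\<in>T0. q \<theta> = 0 \<and> r \<theta> = 0))"

definition DD :: "real \<Rightarrow> real \<Rightarrow> (real \<Rightarrow> real) \<Rightarrow> (real \<Rightarrow> real) \<Rightarrow> bool" where
  "DD tlo thi P q \<longleftrightarrow> (\<forall>\<theta>\<in>{tlo..thi}. q \<theta> \<le> qeff P \<theta>) \<and> q tlo = qeff P tlo"

definition left_continuous ::
  "real \<Rightarrow> real \<Rightarrow> (real \<Rightarrow> real) \<Rightarrow> (real \<Rightarrow> real) \<Rightarrow> bool" where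
  "left_continuous tlo thi r q \<longleftrightarrow>
     (\<forall>\<theta>\<in>{tlo<..thi}. continuous (at_left \<theta>) (\<lambda>x. q x * r x))"

end

theory Submission
  imports Defs
begin


locale PP =
  fixes P :: "real \<Rightarrow> real" and c qbar :: real
  assumes Pc: "continuous_on {0..} P" and Pm: "strict_antimono_on {0..} P"
    and qb: "qbar > 0" and Pqb: "P qbar = 0" and cpos: "c > 0"
begin

lemma Plt: "0 \<le> s \<Longrightarrow> s < t \<Longrightarrow> P t < P s"
  using Pm unfolding monotone_on_def by auto

lemma Ple: "0 \<le> s \<Longrightarrow> s \<le> t \<Longrightarrow> P t \<le> P s"
  using Plt[of s t] by (cases "s = t") auto

lemma Pint: "0 \<le> z \<Longrightarrow> P integrable_on {z..w}"
  by (rule integrable_continuous_interval) (rule continuous_on_subset[OF Pc], auto)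

lemma V_diff: "0 \<le> z \<Longrightarrow> z \<le> w \<Longrightarrow> V P w - V P z = integral {z..w} P"
  unfolding V_def using Henstock_Kurzweil_Integration.integral_combine[of 0 z w P] Pint[of 0 w]
  by auto

lemma V_upper: "0 \<le> z \<Longrightarrow> z \<le> w \<Longrightarrow> V P w - V P z \<le> (w - z) * P z"
proof -
  assume h: "0 \<le> z" "z \<le> w"
  have "integral {z..w} P \<le> integral {z..w} (\<lambda>_. P z)"
    by (rule integral_le) (use h Pint[of z w] Ple in auto)
  then show ?thesis using V_diff[OF h] h by simp
qed

lemma V_lower: "0 \<le> z \<Longrightarrow> z \<le> w \<Longrightarrow> V P w - V P z \<ge> (w - z) * P w"
proof -
  assume h: "0 \<le> z" "z \<le> w"
  have "integral {z..w} (\<lambda>_. P w) \<le> integral {z..w} P"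
    by (rule integral_le) (use h Pint[of z w] Ple in auto)
  then show ?thesis using V_diff[OF h] h by simp
qed

lemma V0: "V P 0 = 0" unfolding V_def by simp

lemma V_cont: "continuous_on {0..B} (V P)"
  unfolding V_def[abs_def] by (rule indefinite_integral_continuous_1) (rule Pint, simp)

lemma V_le: "0 \<le> z \<Longrightarrow> V P z \<le> z * P 0"
  using V_upper[of 0 z] V0 by simp

lemma inv_ex: assumes "0 < th" "th \<le> P 0" shows "qeff P th \<ge> 0" "P (qeff P th) = th" "qeff P th \<le> qbar"
proof -
  have "continuous_on {0..qbar} P" by (rule continuous_on_subset[OF Pc]) auto
  then obtain e where e: "0 \<le> e" "e \<le> qbar" "P e = th"
    using IVT2'[of P qbar th 0] assms qb Pqb by auto
  have u: "\<And>q. q \<ge> 0 \<and> P q = th \<Longrightarrow> q = e"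
  proof -
    fix q assume "q \<ge> 0 \<and> P q = th"
    then show "q = e" using Plt[of q e] Plt[of e q] e by (metis linorder_neq_iff order_less_irrefl)
  qed
  have "qeff P th = e" unfolding qeff_def
  proof (rule the_equality)
    show "0 \<le> e \<and> P e = th" using e by simp
    show "\<And>q. 0 \<le> q \<and> P q = th \<Longrightarrow> q = e" by (rule u)
  qed
  then show "qeff P th \<ge> 0" "P (qeff P th) = th" "qeff P th \<le> qbar" using e by auto
qed

end

locale PPT = PP +
  fixes a b :: real
  assumes apos: "0 < a" and ab: "a < b" and bP0: "b \<le> P 0"
    and A2: "TS P c b (qeff P b) > 0"
begin

abbreviation "e \<equiv> qeff P"

lemma e_props: assumes "a \<le> t" "t \<le> b" shows "e t \<ge> 0" "P (e t) = t" "e t \<le> qbar"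
  using inv_ex[of t] assms apos bP0 by auto

lemma e_anti: assumes "a \<le> s" "s \<le> t" "t \<le> b" shows "e t \<le> e s"
proof (rule ccontr)
  assume "\<not> e t \<le> e s"
  then have "P (e t) < P (e s)" using Plt[of "e s" "e t"] e_props(1)[of s] assms by auto
  then show False using e_props assms by auto
qed

definition f where "f q = V P q - q * P q"

lemma f_mono: assumes "0 < q1" "q1 < q2" shows "f q1 < f q2"
proof -
  have "V P q2 - V P q1 \<ge> (q2 - q1) * P q2" using V_lower assms by auto
  moreover have "P q2 < P q1" using Plt assms by auto
  ultimately have "q1 * (P q1 - P q2) > 0" "V P q2 - V P q1 \<ge> (q2 - q1) * P q2"
    using assms by auto
  then show ?thesis unfolding f_def by (simp add: algebra_simps)
qed

lemma eb_pos: "e b > 0"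
proof -
  have "e b \<noteq> 0" using A2 unfolding TS_def by auto
  then show ?thesis using e_props[of b] ab by auto
qed

lemma f_eb: "f (e b) > c"
  using A2 eb_pos e_props[of b] ab unfolding TS_def f_def by (auto simp: mult.commute)

lemma f_cont: "continuous_on {0..B} f"
proof -
  have "continuous_on {0..B} P" by (rule continuous_on_subset[OF Pc]) auto
  then show ?thesis unfolding f_def[abs_def] using V_cont[of B] by (intro continuous_intros) auto
qed

definition qh where "qh = (SOME q. 0 \<le> q \<and> q \<le> e b \<and> f q = c)"

lemma qh_ex: "0 \<le> qh \<and> qh \<le> e b \<and> f qh = c"
proof -
  have "\<exists>q. 0 \<le> q \<and> q \<le> e b \<and> f q = c"
    using IVT'[of f 0 c "e b"] f_cont[of "e b"] f_eb eb_pos cpos V0 unfolding f_def by auto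
  then show ?thesis unfolding qh_def by (rule someI_ex)
qed

lemma f0: "f 0 = 0" unfolding f_def using V0 by simp

lemma qh_pos: "qh > 0" using qh_ex f0 cpos by (metis order_le_less)
lemma qh_lt: "qh < e b" using qh_ex f_eb by (metis order_le_less order_less_irrefl)
lemma f_qh: "f qh = c" using qh_ex by simp

lemma qfloor_eq: "qfloor P c = qh"
  unfolding qfloor_def
proof (rule the_equality)
  show "0 < qh \<and> V P qh - qh * P qh = c" using qh_pos f_qh unfolding f_def by simp
  fix q assume "0 < q \<and> V P q - q * P q = c"
  then have "f q = c" "q > 0" unfolding f_def by auto
  then show "q = qh" using f_mono[of q qh] f_mono[of qh q] qh_pos f_qh
    by (metis linorder_neq_iff order_less_irrefl)
qed

lemma f_ge: "qh \<le> z \<Longrightarrow> f z \<ge> c"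
  using f_mono[of qh z] qh_pos f_qh by (cases "qh = z") auto

lemma qh_le_e: "a \<le> t \<Longrightarrow> t \<le> b \<Longrightarrow> qh < e t"
  using qh_lt e_anti[of t b] by auto

lemma qh_le_qbar: "qh \<le> qbar" using qh_lt e_props[of b] ab by auto

lemma P_qh: "a \<le> t \<Longrightarrow> t \<le> b \<Longrightarrow> t \<le> P qh"
  using Ple[of qh "e t"] qh_le_e qh_pos e_props by fastforce

definition H where "H z = V P (max z qh) - c - (max z qh - z) * P qh"

lemma H_lo: "z \<le> qh \<Longrightarrow> H z = z * P qh"
  unfolding H_def using f_qh unfolding f_def by (simp add: max_def algebra_simps)

lemma H_hi: "qh \<le> z \<Longrightarrow> H z = V P z - c"
  unfolding H_def by (simp add: max_def)

lemma H_cont: "continuous_on {0..qbar} H"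
proof -
  have "continuous_on {0..qbar} (\<lambda>z. V P (max z qh))"
    by (rule continuous_on_compose2[OF V_cont[of qbar]]) (use qh_le_qbar qh_pos in \<open>auto intro!: continuous_intros\<close>)
  then show ?thesis unfolding H_def[abs_def] by (intro continuous_intros) auto
qed


lemma Vline: assumes "0 \<le> w" shows "V P w - c \<le> w * P qh"
proof (cases "qh \<le> w")
  case True
  then have "V P w - V P qh \<le> (w - qh) * P qh" using V_upper qh_pos by auto
  then show ?thesis using f_qh unfolding f_def by (simp add: algebra_simps)
next
  case False
  then have "V P qh - V P w \<ge> (qh - w) * P qh" using V_lower assms by auto
  then show ?thesis using f_qh unfolding f_def by (simp add: algebra_simps)
qed

lemma G1: assumes "0 \<le> r" "r \<le> 1" "0 \<le> q" "q \<le> qbar" "q = 0 \<longleftrightarrow> r = 0"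
  shows "r * TS P c t q \<le> H (q*r) - t*(q*r)"
proof (cases "q = 0")
  case True
  then show ?thesis using assms H_lo[of 0] qh_pos unfolding TS_def by simp
next
  case False
  then have qp: "q > 0" and rp: "r > 0" using assms by auto
  define z where "z = q * r"
  have zq: "z \<le> q" unfolding z_def using assms qp by (simp add: mult_left_le)
  have zp: "z > 0" unfolding z_def using qp rp by simp
  have key: "r * (V P q - c) \<le> H z"
  proof (cases "z \<le> qh")
    case True
    have "r * (V P q - c) \<le> r * (q * P qh)" using Vline[of q] qp rp by (intro mult_left_mono) auto
    then show ?thesis using H_lo[OF True] unfolding z_def by (simp add: algebra_simps)
  next
    case False
    then have Hz: "H z = V P z - c" using H_hi by auto
    have A: "V P q - V P z \<le> (q - z) * P z" using V_upper zq zp by auto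
    have B: "V P z - z * P z \<ge> c" using f_ge[of z] False unfolding f_def by auto
    have "z * (V P q - c) \<le> z * (V P z - c) + z * ((q - z) * P z)"
      using mult_left_mono[OF A, of z] zp by (simp add: algebra_simps)
    also have "z * ((q - z) * P z) \<le> (q - z) * (V P z - c)"
      using mult_left_mono[OF B, of "q - z"] zq by (simp add: algebra_simps)
    finally have "z * (V P q - c) \<le> q * (V P z - c)" by (simp add: algebra_simps)
    then have "r * q * (V P q - c) \<le> q * (V P z - c)" unfolding z_def by (simp add: algebra_simps)
    then have "q * (r * (V P q - c)) \<le> q * (V P z - c)" by (simp add: algebra_simps)
    then show ?thesis using Hz qp by simp
  qed
  show ?thesis using key False unfolding TS_def z_def by (simp add: algebra_simps)
qed

lemma G2: assumes "(qh \<le> q \<and> r = 1) \<or> (q = qh \<and> 0 < r \<and> r < 1) \<or> (q = 0 \<and> r = 0)"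
  shows "r * TS P c t q = H (q*r) - t*(q*r)"
  using assms
proof (elim disjE)
  assume h: "qh \<le> q \<and> r = 1"
  then show ?thesis using H_hi[of q] qh_pos unfolding TS_def by auto
next
  assume h: "q = qh \<and> 0 < r \<and> r < 1"
  then have "H (q*r) = q * r * P qh" using H_lo[of "q*r"] qh_pos by (simp add: mult_left_le)
  then show ?thesis using h f_qh qh_pos unfolding TS_def f_def by (simp add: algebra_simps)
next
  assume "q = 0 \<and> r = 0"
  then show ?thesis using H_lo[of 0] qh_pos unfolding TS_def by simp
qed

lemma G4a: assumes "a \<le> t" "t \<le> b" "z \<le> w" "w \<le> qh" shows "H z - t*z \<le> H w - t*w"
proof -
  have "(w - z) * t \<le> (w - z) * P qh" using P_qh assms by (intro mult_left_mono) auto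
  then show ?thesis using H_lo assms by (simp add: algebra_simps)
qed

lemma G4b: assumes "a \<le> t" "t \<le> b" "qh \<le> z" "z \<le> w" "w \<le> e t" shows "H z - t*z \<le> H w - t*w"
proof -
  have "P w \<ge> t" using Ple[of w "e t"] e_props assms qh_pos by fastforce
  then have "(w - z) * t \<le> (w - z) * P w" using assms by (intro mult_left_mono) auto
  moreover have "V P w - V P z \<ge> (w - z) * P w" using V_lower assms qh_pos by auto
  moreover have "H z = V P z - c" "H w = V P w - c" using H_hi assms by auto
  ultimately show ?thesis by (simp add: algebra_simps)
qed

lemma G4: assumes "a \<le> t" "t \<le> b" "z \<le> w" "w \<le> e t" shows "H z - t*z \<le> H w - t*w"
proof (cases "w \<le> qh")
  case True then show ?thesis using G4a assms by auto
next
  case False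
  show ?thesis
  proof (cases "qh \<le> z")
    case True then show ?thesis using G4b assms by auto
  next
    case F2: False
    have "H z - t*z \<le> H qh - t*qh" using G4a[of t z qh] assms F2 by auto
    also have "\<dots> \<le> H w - t*w" using G4b[of t qh w] assms False by auto
    finally show ?thesis .
  qed
qed

lemma G5: assumes "a \<le> t" "t \<le> b" shows "H z - t*z \<le> H (e t) - t*(e t)"
proof (cases "z \<le> e t")
  case True then show ?thesis using G4 assms by auto
next
  case False
  have q: "qh \<le> e t" using qh_le_e[OF assms] by auto
  have "V P z - V P (e t) \<le> (z - e t) * P (e t)" using V_upper[of "e t" z] e_props[OF assms] False by auto
  then show ?thesis using H_hi[of z] H_hi[of "e t"] q False e_props assms by (simp add: algebra_simps)
qed

end


lemma telescope_zero:
  fixes F g :: "real \<Rightarrow> real"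
  assumes pq: "p \<le> q"
    and bd: "\<And>s t. p \<le> s \<Longrightarrow> s \<le> t \<Longrightarrow> t \<le> q \<Longrightarrow> \<bar>F t - F s\<bar> \<le> (t - s) * (g s - g t)"
  shows "F q = F p"
proof -
  have step: "\<bar>F q - F p\<bar> * real n \<le> (q - p) * (g p - g q)" if n: "n \<ge> 1" for n :: nat
  proof -
    define h where "h = (q - p) / real n"
    have h0: "h \<ge> 0" using pq n unfolding h_def by auto
    have hn: "real n * h = q - p" unfolding h_def using n by auto
    have main: "k \<le> n \<longrightarrow> \<bar>F (p + real k * h) - F p\<bar> \<le> h * (g p - g (p + real k * h))" for k
    proof (induction k)
      case 0 show ?case by simp
    next
      case (Suc k)
      show ?case
      proof
        assume sk: "Suc k \<le> n"
        then have IH: "\<bar>F (p + real k * h) - F p\<bar> \<le> h * (g p - g (p + real k * h))" using Suc by auto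
        have "real (Suc k) * h \<le> real n * h" using sk h0 by (intro mult_right_mono) auto
        then have le: "p + real (Suc k) * h \<le> q" using hn by simp
        have s1: "p \<le> p + real k * h" using h0 by simp
        have s2: "p + real k * h \<le> p + real (Suc k) * h" using h0 by (simp add: algebra_simps)
        have B: "\<bar>F (p + real (Suc k) * h) - F (p + real k * h)\<bar>
              \<le> ((p + real (Suc k) * h) - (p + real k * h)) * (g (p + real k * h) - g (p + real (Suc k) * h))"
          by (rule bd[OF s1 s2 le])
        have "(p + real (Suc k) * h) - (p + real k * h) = h" by (simp add: algebra_simps)
        then have B': "\<bar>F (p + real (Suc k) * h) - F (p + real k * h)\<bar>
              \<le> h * (g (p + real k * h) - g (p + real (Suc k) * h))" using B by simp
        have "\<bar>F (p + real (Suc k) * h) - F p\<bar> \<le> \<bar>F (p + real (Suc k) * h) - F (p + real k * h)\<bar> + \<bar>F (p + real k * h) - F p\<bar>"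
          by linarith
        also have "\<dots> \<le> h * (g (p + real k * h) - g (p + real (Suc k) * h)) + h * (g p - g (p + real k * h))"
          using B' IH by linarith
        also have "\<dots> = h * (g p - g (p + real (Suc k) * h))" by (simp add: algebra_simps)
        finally show "\<bar>F (p + real (Suc k) * h) - F p\<bar> \<le> h * (g p - g (p + real (Suc k) * h))" .
      qed
    qed
    have "\<bar>F q - F p\<bar> \<le> h * (g p - g q)" using main[of n] hn by simp
    then have "\<bar>F q - F p\<bar> * real n \<le> h * (g p - g q) * real n" using n by (intro mult_right_mono) auto
    also have "\<dots> = (real n * h) * (g p - g q)" by (simp add: algebra_simps)
    also have "\<dots> = (q - p) * (g p - g q)" using hn by simp
    finally show ?thesis .
  qed
  show ?thesis
  proof (rule ccontr)
    assume "F q \<noteq> F p"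
    then have d: "\<bar>F q - F p\<bar> > 0" by simp
    obtain n :: nat where n: "(q - p) * (g p - g q) / \<bar>F q - F p\<bar> < real n" using reals_Archimedean2 by blast
    have "(q - p) * (g p - g q) \<ge> 0" using bd[of p q] pq by auto
    then have "real n > 0" using n d by (smt (verit) divide_nonneg_pos)
    then have n1: "n \<ge> 1" by simp
    have "(q - p) * (g p - g q) < real n * \<bar>F q - F p\<bar>" using n d by (simp add: divide_less_eq)
    then show False using step[OF n1] by (simp add: mult.commute)
  qed
qed

lemma IC_integral:
  fixes w f g :: "real \<Rightarrow> real"
  assumes pq: "p \<le> q"
    and wb: "\<And>s t. p \<le> s \<Longrightarrow> s \<le> t \<Longrightarrow> t \<le> q \<Longrightarrow> (t - s) * g t \<le> w s - w t \<and> w s - w t \<le> (t - s) * g s"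
    and fi: "f integrable_on {p..q}"
    and fb: "\<And>s t. p \<le> s \<Longrightarrow> s \<le> t \<Longrightarrow> t \<le> q \<Longrightarrow> (t - s) * g t \<le> integral {s..t} f \<and> integral {s..t} f \<le> (t - s) * g s"
  shows "w p - w q = integral {p..q} f"
proof -
  define F where "F x = w x + integral {p..x} f" for x
  have "F q = F p"
  proof (rule telescope_zero[OF pq, where g = g])
    fix s t assume h: "p \<le> s" "s \<le> t" "t \<le> q"
    have fi2: "f integrable_on {p..t}" using integrable_subinterval_real[OF fi] h by auto
    have "integral {p..s} f + integral {s..t} f = integral {p..t} f"
      by (rule Henstock_Kurzweil_Integration.integral_combine[OF h(1,2) fi2])
    then have "F t - F s = integral {s..t} f - (w s - w t)" unfolding F_def by simp
    moreover have "(t - s) * g t \<le> w s - w t" "w s - w t \<le> (t - s) * g s"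
      "(t - s) * g t \<le> integral {s..t} f" "integral {s..t} f \<le> (t - s) * g s"
      using wb[OF h] fb[OF h] by auto
    moreover have "(t - s) * (g s - g t) = (t - s) * g s - (t - s) * g t" by (simp add: algebra_simps)
    ultimately show "\<bar>F t - F s\<bar> \<le> (t - s) * (g s - g t)" by (simp add: abs_le_iff)
  qed
  then show ?thesis unfolding F_def by simp
qed

lemma antimono_integrable:
  fixes f :: "real \<Rightarrow> real"
  assumes "\<And>s t. p \<le> s \<Longrightarrow> s \<le> t \<Longrightarrow> t \<le> q \<Longrightarrow> f t \<le> f s"
  shows "f integrable_on {p..q}"
proof -
  have "mono_on {p..q} (\<lambda>x. - f x)" using assms by (auto simp: mono_on_def)
  then have "(\<lambda>x. - f x) integrable_on {p..q}" by (rule integrable_on_mono_on)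
  then show ?thesis using integrable_neg by fastforce
qed

lemma antimono_integral_bounds:
  fixes f :: "real \<Rightarrow> real"
  assumes "\<And>s t. p \<le> s \<Longrightarrow> s \<le> t \<Longrightarrow> t \<le> q \<Longrightarrow> f t \<le> f s"
    and "p \<le> s" "s \<le> t" "t \<le> q"
  shows "(t - s) * f t \<le> integral {s..t} f \<and> integral {s..t} f \<le> (t - s) * f s"
proof -
  have fi: "f integrable_on {s..t}" by (rule antimono_integrable) (use assms in auto)
  have "integral {s..t} (\<lambda>_. f t) \<le> integral {s..t} f"
    by (rule integral_le) (use fi assms in auto)
  moreover have "integral {s..t} f \<le> integral {s..t} (\<lambda>_. f s)"
    by (rule integral_le) (use fi assms in auto)
  ultimately show ?thesis using assms by simp
qed

lemma integral_sub_le: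
  fixes f :: "real \<Rightarrow> real"
  assumes fi: "f integrable_on {p..q}" and nn: "\<And>x. p \<le> x \<Longrightarrow> x \<le> q \<Longrightarrow> f x \<ge> 0"
    and "p \<le> s" "s \<le> t" "t \<le> q"
  shows "integral {s..t} f \<le> integral {p..q} f"
proof -
  have i1: "f integrable_on {p..t}" using integrable_subinterval_real[OF fi] assms by auto
  have e1: "integral {p..s} f + integral {s..t} f = integral {p..t} f"
    by (rule Henstock_Kurzweil_Integration.integral_combine) (use assms i1 in auto)
  have e2: "integral {p..t} f + integral {t..q} f = integral {p..q} f"
    by (rule Henstock_Kurzweil_Integration.integral_combine) (use assms fi in auto)
  have "integral {p..s} f \<ge> 0"
    by (rule integral_nonneg) (use integrable_subinterval_real[OF fi] assms nn in auto)
  moreover have "integral {t..q} f \<ge> 0"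
    by (rule integral_nonneg) (use integrable_subinterval_real[OF fi] assms nn in auto)
  ultimately show ?thesis using e1 e2 by linarith
qed



lemma IC_bounds:
  assumes "IC a b r q u" "a \<le> s" "s \<le> t" "t \<le> b"
  shows "(t - s) * (q t * r t) \<le> u s - u t \<and> u s - u t \<le> (t - s) * (q s * r s)"
proof -
  have "u s \<ge> u t + (t - s) * q t * r t" "u t \<ge> u s + (s - t) * q s * r s"
    using assms unfolding IC_def by auto
  then show ?thesis by (simp add: algebra_simps)
qed

lemma IC_anti:
  assumes "IC a b r q u" "a \<le> s" "s \<le> t" "t \<le> b"
  shows "q t * r t \<le> q s * r s"
proof (cases "s = t")
  case False
  then have "(t - s) * (q t * r t) \<le> (t - s) * (q s * r s)" using IC_bounds[OF assms] by linarith
  then show ?thesis using False assms by (simp add: mult_le_cancel_left)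
qed simp

lemma mech_x:
  assumes "mechanism a b qbar r q u" "a \<le> t" "t \<le> b"
  shows "0 \<le> q t * r t \<and> q t * r t \<le> q t \<and> q t \<le> qbar \<and> 0 \<le> r t \<and> r t \<le> 1 \<and> 0 \<le> q t \<and> (q t = 0 \<longleftrightarrow> r t = 0)"
  using assms unfolding mechanism_def by (auto simp: mult_left_le)

lemma IC_left_cont:
  assumes "IC a b r q u" "mechanism a b qbar r q u" "a < th" "th \<le> b"
  shows "(u \<longlongrightarrow> u th) (at_left th)"
proof (rule tendsto_sandwich[where f = "\<lambda>t. u th" and h = "\<lambda>t. u th + (th - t) * qbar"])
  have "u th \<le> u t \<and> u t \<le> u th + (th - t) * qbar" if t: "t \<in> {a<..<th}" for t
  proof -
    have B: "(th - t) * (q th * r th) \<le> u t - u th \<and> u t - u th \<le> (th - t) * (q t * r t)"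
      using IC_bounds[OF assms(1), of t th] t assms by auto
    have m1: "0 \<le> q th * r th" using mech_x[OF assms(2), of th] assms by auto
    have "q t * r t \<le> q t" "q t \<le> qbar" using mech_x[OF assms(2), of t] t assms by auto
    then have "0 \<le> q th * r th" "q t * r t \<le> qbar" using m1 by auto
    then have "0 \<le> (th - t) * (q th * r th)" "(th - t) * (q t * r t) \<le> (th - t) * qbar"
      using t by (auto intro: mult_left_mono)
    then show ?thesis using B by linarith
  qed
  then show "\<forall>\<^sub>F t in at_left th. u th \<le> u t" "\<forall>\<^sub>F t in at_left th. u t \<le> u th + (th - t) * qbar"
    using eventually_at_leftI[of a th] assms by (auto)
  show "((\<lambda>t. u th) \<longlongrightarrow> u th) (at_left th)" by simp
  have "((\<lambda>t. u th + (th - t) * qbar) \<longlongrightarrow> u th + (th - th) * qbar) (at_left th)"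
    by (intro tendsto_intros)
  then show "((\<lambda>t. u th + (th - t) * qbar) \<longlongrightarrow> u th) (at_left th)" by simp
qed



theorem theorem5:
  fixes tlo thi c qbar \<alpha> :: real and P r q u :: "real \<Rightarrow> real"
  assumes "0 < tlo" and "tlo < thi" and "c > 0"
    and "continuous_on {0..} P" and "strict_antimono_on {0..} P"
    and "qbar > 0" and "P qbar = 0"
    and A2: "TS P c thi (qeff P thi) > 0"
    and "0 \<le> \<alpha>" and "\<alpha> < 1"
    and FR: "floor_randomized tlo thi qbar P c r q u"
    and LC: "left_continuous tlo thi r q"
    and "DD tlo thi P q"
    and dom: "dominated tlo thi qbar P c \<alpha> r q u"
  shows "\<exists>r' q' u'. floor_randomized tlo thi qbar P c r' q' u' \<and>
           left_continuous tlo thi r' q' \<and> DD tlo thi P q' \<and>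
           dominates tlo thi qbar P c \<alpha> r' q' u' r q u \<and>
           (\<forall>\<theta>\<in>{tlo..thi}. q' \<theta> * r' \<theta> \<le> q \<theta> * r \<theta>)"
proof -
  interpret PP P c qbar using assms(3-7) by unfold_locales auto
  from FR have feas: "feasible tlo thi qbar r q u" and ub: "u thi = 0"
    and Tex: "\<exists>T1 T01 T0.
        interval_set T1 \<and> interval_set T01 \<and> interval_set T0 \<and>
        T1 \<inter> T01 = {} \<and> T1 \<inter> T0 = {} \<and> T01 \<inter> T0 = {} \<and>
        T1 \<union> T01 \<union> T0 = {tlo..thi} \<and>
        (\<forall>x\<in>T0. \<forall>y\<in>T01. x > y) \<and> (\<forall>x\<in>T01. \<forall>y\<in>T1. x > y) \<and>
        (\<forall>\<theta>\<in>T1. q \<theta> \<ge> qfloor P c \<and> r \<theta> = 1) \<and>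
        (\<forall>\<theta>\<in>T01. q \<theta> = qfloor P c \<and> 0 < r \<theta> \<and> r \<theta> < 1) \<and>
        (\<forall>\<theta>\<in>T0. q \<theta> = 0 \<and> r \<theta> = 0)"
    unfolding floor_randomized_def by auto
  have mechM: "mechanism tlo thi qbar r q u" and ICM: "IC tlo thi r q u" and IRM: "IR tlo thi u"
    using feas unfolding feasible_def by auto
  have DDM: "\<And>t. t \<in> {tlo..thi} \<Longrightarrow> q t \<le> qeff P t" "q tlo = qeff P tlo"
    using assms(13) unfolding DD_def by auto
  have bP0: "thi \<le> P 0"
  proof (rule ccontr)
    assume nb: "\<not> thi \<le> P 0"
    define K where "K = qeff P thi"
    have "0 \<le> q thi" using mech_x[OF mechM, of thi] assms(2) by auto
    moreover have "q thi \<le> K" using DDM(1)[of thi] assms(2) unfolding K_def by auto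
    moreover have K0: "K \<noteq> 0" using A2 unfolding TS_def K_def by auto
    ultimately have Kp: "K > 0" by auto
    have "V P K \<le> K * P 0" using V_le Kp by auto
    moreover have "K * P 0 < K * thi" using nb Kp by auto
    ultimately have "V P K - c - thi * K < 0" using assms(3) by (simp add: algebra_simps)
    then show False using A2 K0 unfolding TS_def K_def by auto
  qed
  interpret PPT P c qbar tlo thi using assms(1,2) bP0 A2 by unfold_locales auto
  have Tri: "(qh \<le> q t \<and> r t = 1) \<or> (q t = qh \<and> 0 < r t \<and> r t < 1) \<or> (q t = 0 \<and> r t = 0)"
    if t: "t \<in> {tlo..thi}" for t
  proof -
    obtain T1 T01 T0 where T: "T1 \<union> T01 \<union> T0 = {tlo..thi}"
        "(\<forall>\<theta>\<in>T1. q \<theta> \<ge> qfloor P c \<and> r \<theta> = 1)"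
        "(\<forall>\<theta>\<in>T01. q \<theta> = qfloor P c \<and> 0 < r \<theta> \<and> r \<theta> < 1)"
        "(\<forall>\<theta>\<in>T0. q \<theta> = 0 \<and> r \<theta> = 0)" using Tex by blast
    have "t \<in> T1 \<or> t \<in> T01 \<or> t \<in> T0" using T(1) t by blast
    then show ?thesis using T(2-4) qfloor_eq by auto
  qed
  obtain r1 q1 u1 where D: "dominates tlo thi qbar P c \<alpha> r1 q1 u1 r q u"
    using dom unfolding dominated_def by auto
  have feas1: "feasible tlo thi qbar r1 q1 u1"
    and ge: "\<And>t. t \<in> {tlo..thi} \<Longrightarrow> RS P c \<alpha> t r1 q1 u1 \<ge> RS P c \<alpha> t r q u"
    and strict: "\<exists>\<theta>\<in>{tlo..thi}. RS P c \<alpha> \<theta> r1 q1 u1 > RS P c \<alpha> \<theta> r q u"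
    using D unfolding dominates_def by auto
  have mech1: "mechanism tlo thi qbar r1 q1 u1" and IC1: "IC tlo thi r1 q1 u1" and IR1: "IR tlo thi u1"
    using feas1 unfolding feasible_def by auto
  define x where "x t = q t * r t" for t
  define y where "y t = q1 t * r1 t" for t
  have xb: "0 \<le> x t \<and> x t \<le> q t \<and> x t \<le> qbar" if "t \<in> {tlo..thi}" for t
    using mech_x[OF mechM, of t] that unfolding x_def by auto
  have yb: "0 \<le> y t \<and> y t \<le> qbar" if "t \<in> {tlo..thi}" for t
    using mech_x[OF mech1, of t] that unfolding y_def by auto
  have xa: "x t \<le> x s" if "tlo \<le> s" "s \<le> t" "t \<le> thi" for s t
    using IC_anti[OF ICM that] unfolding x_def by auto
  have ya: "y t \<le> y s" if "tlo \<le> s" "s \<le> t" "t \<le> thi" for s t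
    using IC_anti[OF IC1 that] unfolding y_def by auto
  have u_int: "u t = integral {t..thi} x" if t: "t \<in> {tlo..thi}" for t
  proof -
    have "u t - u thi = integral {t..thi} x"
    proof (rule IC_integral[where g = x])
      show "t \<le> thi" using t by auto
      show "\<And>s s'. t \<le> s \<Longrightarrow> s \<le> s' \<Longrightarrow> s' \<le> thi \<Longrightarrow> (s' - s) * x s' \<le> u s - u s' \<and> u s - u s' \<le> (s' - s) * x s"
        using IC_bounds[OF ICM] t unfolding x_def by auto
      show "x integrable_on {t..thi}" by (rule antimono_integrable) (use xa t in auto)
      show "\<And>s s'. t \<le> s \<Longrightarrow> s \<le> s' \<Longrightarrow> s' \<le> thi \<Longrightarrow> (s' - s) * x s' \<le> integral {s..s'} x \<and> integral {s..s'} x \<le> (s' - s) * x s"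
        by (rule antimono_integral_bounds[where p = t and q = thi]) (use xa t in auto)
    qed
    then show ?thesis using ub by simp
  qed
  have RSM: "RS P c \<alpha> t r q u = H (x t) - t * x t - (1 - \<alpha>) * u t" if t: "t \<in> {tlo..thi}" for t
    using G2[OF Tri[OF t], of t] unfolding RS_def x_def by simp
  have RS1: "RS P c \<alpha> t r1 q1 u1 \<le> H (y t) - t * y t - (1 - \<alpha>) * u1 t" if t: "t \<in> {tlo..thi}" for t
    using G1[of "r1 t" "q1 t" t] mech_x[OF mech1, of t] t unfolding RS_def y_def by auto
  have pw: "H (x t) - t * x t - (1 - \<alpha>) * u t \<le> H (y t) - t * y t - (1 - \<alpha>) * u1 t"
    if t: "t \<in> {tlo..thi}" for t
    using ge[OF t] RSM[OF t] RS1[OF t] by linarith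
  define L where "L t = (if t \<le> tlo then max (x t) (y t) else Inf (y ` {tlo..<t}))" for t
  have bdd: "bdd_below (y ` {tlo..<t})" if "t \<le> thi" for t
    by (rule bdd_belowI[of _ 0]) (use yb that in auto)
  have L_ge_y: "y t \<le> L t" if t: "t \<in> {tlo..thi}" for t
  proof (cases "t \<le> tlo")
    case True then show ?thesis unfolding L_def by auto
  next
    case False
    have "y t \<le> Inf (y ` {tlo..<t})" by (rule cInf_greatest) (use False t ya in auto)
    then show ?thesis using False unfolding L_def by auto
  qed
  have L_le_y: "L t \<le> y s" if st: "tlo \<le> s" "s < t" "t \<le> thi" for s t
  proof -
    have "Inf (y ` {tlo..<t}) \<le> y s" by (rule cInf_lower) (use st bdd in auto)
    then show ?thesis using st unfolding L_def by auto
  qed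
  have L_anti: "L t \<le> L s" if st: "tlo \<le> s" "s \<le> t" "t \<le> thi" for s t
  proof (cases "s = t")
    case False
    show ?thesis
    proof (cases "s \<le> tlo")
      case True
      then have "s = tlo" using st by auto
      then show ?thesis using L_le_y[of tlo t] st False unfolding L_def by auto
    next
      case F2: False
      have "L t \<le> Inf (y ` {tlo..<s})"
        by (rule cInf_greatest) (use F2 st L_le_y in auto)
      then show ?thesis using F2 unfolding L_def by auto
    qed
  qed simp
  have Lb: "0 \<le> L t \<and> L t \<le> qbar" if t: "t \<in> {tlo..thi}" for t
  proof -
    have "L t \<le> L tlo" using L_anti t by auto
    moreover have "L tlo \<le> qbar" using xb[of tlo] yb[of tlo] assms(2) unfolding L_def by auto
    ultimately show ?thesis using L_ge_y[OF t] yb[OF t] by auto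
  qed
  have L_lim: "(y \<longlongrightarrow> L th) (at_left th) \<and> (L \<longlongrightarrow> L th) (at_left th)"
    if th: "tlo < th" "th \<le> thi" for th
  proof -
    have LI: "L th = Inf (y ` {tlo..<th})" using th unfolding L_def by auto
    have "\<forall>\<^sub>F t in at_left th. dist (y t) (L th) < \<epsilon> \<and> dist (L t) (L th) < \<epsilon>" if e: "\<epsilon> > 0" for \<epsilon>
    proof -
      have "Inf (y ` {tlo..<th}) < L th + \<epsilon>" using LI e by simp
      then obtain t0 where t0: "tlo \<le> t0" "t0 < th" "y t0 < L th + \<epsilon>"
        using cInf_less_iff[of "y ` {tlo..<th}"] bdd[of th] th by auto
      show ?thesis
      proof (rule eventually_at_leftI[of t0])
        fix t assume t: "t \<in> {t0<..<th}"
        have "L th \<le> y t" using L_le_y[of t th] t t0 th by auto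
        moreover have "y t \<le> y t0" using ya[of t0 t] t t0 th by auto
        moreover have "L th \<le> L t" using L_anti[of t th] t t0 th by auto
        moreover have "L t \<le> y t0" using L_le_y[of t0 t] t t0 th by auto
        ultimately show "dist (y t) (L th) < \<epsilon> \<and> dist (L t) (L th) < \<epsilon>"
          using t0 by (auto simp: dist_real_def)
      qed (use t0 in auto)
    qed
    note ev = this
    show ?thesis
    proof (intro conjI)
      show "(y \<longlongrightarrow> L th) (at_left th)" unfolding tendsto_iff
      proof (intro allI impI)
        fix e :: real assume "e > 0"
        from ev[OF this] show "\<forall>\<^sub>F t in at_left th. dist (y t) (L th) < e" by (rule eventually_mono) auto
      qed
      show "(L \<longlongrightarrow> L th) (at_left th)" unfolding tendsto_iff
      proof (intro allI impI)
        fix e :: real assume "e > 0"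
        from ev[OF this] show "\<forall>\<^sub>F t in at_left th. dist (L t) (L th) < e" by (rule eventually_mono) auto
      qed
    qed
  qed
  have L_int: "L integrable_on {s..t}" if "tlo \<le> s" "t \<le> thi" for s t
    by (rule antimono_integrable) (use that L_anti in auto)
  have L_bounds: "(t - s) * y t \<le> integral {s..t} L \<and> integral {s..t} L \<le> (t - s) * y s"
    if st: "tlo \<le> s" "s \<le> t" "t \<le> thi" for s t
  proof -
    have "integral {s..t} (\<lambda>_. y t) \<le> integral {s..t} L"
    proof (rule integral_le)
      show "L integrable_on {s..t}" using L_int st by auto
      fix w assume "w \<in> {s..t}"
      then show "y t \<le> L w" using ya[of w t] L_ge_y[of w] st by auto
    qed auto
    moreover
    define L' where "L' w = (if w = s then y s else L w)" for w
    have eq: "integral {s..t} L' = integral {s..t} L"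
      by (rule integral_spike[of "{s}"]) (auto simp: L'_def)
    have "L' integrable_on {s..t}"
      by (rule integrable_spike[OF L_int[of s t] negligible_sing[of s]]) (use st in \<open>auto simp: L'_def\<close>)
    then have "integral {s..t} L' \<le> integral {s..t} (\<lambda>_. y s)"
      by (rule integral_le) (use L_le_y st in \<open>auto simp: L'_def\<close>)
    ultimately show ?thesis using eq st by simp
  qed
  have u1_int: "u1 t - u1 thi = integral {t..thi} L" if t: "t \<in> {tlo..thi}" for t
  proof (rule IC_integral[where g = y])
    show "t \<le> thi" using t by auto
    show "\<And>s s'. t \<le> s \<Longrightarrow> s \<le> s' \<Longrightarrow> s' \<le> thi \<Longrightarrow> (s' - s) * y s' \<le> u1 s - u1 s' \<and> u1 s - u1 s' \<le> (s' - s) * y s"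
      using IC_bounds[OF IC1] t unfolding y_def by auto
    show "L integrable_on {t..thi}" using L_int t by auto
    show "\<And>s s'. t \<le> s \<Longrightarrow> s \<le> s' \<Longrightarrow> s' \<le> thi \<Longrightarrow> (s' - s) * y s' \<le> integral {s..s'} L \<and> integral {s..s'} L \<le> (s' - s) * y s"
      using L_bounds t by auto
  qed
  have x_lim: "(x \<longlongrightarrow> x th) (at_left th)" if th: "tlo < th" "th \<le> thi" for th
  proof -
    have "continuous (at_left th) (\<lambda>t. q t * r t)" using LC th unfolding left_continuous_def by auto
    then have "((\<lambda>t. q t * r t) \<longlongrightarrow> q th * r th) (at_left th)" by (simp add: continuous_within)
    then show ?thesis unfolding x_def .
  qed
  have F6: "H (x th) - th * x th - (1 - \<alpha>) * u th \<le> H (L th) - th * L th - (1 - \<alpha>) * u1 th"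
    if th: "tlo < th" "th \<le> thi" for th
  proof -
    have evy: "\<forall>\<^sub>F t in at_left th. y t \<in> {0..qbar}"
      by (rule eventually_at_leftI[of tlo]) (use yb th in auto)
    have evx: "\<forall>\<^sub>F t in at_left th. x t \<in> {0..qbar}"
      by (rule eventually_at_leftI[of tlo]) (use xb th in auto)
    have Hy: "((\<lambda>t. H (y t)) \<longlongrightarrow> H (L th)) (at_left th)"
      by (rule continuous_on_tendsto_compose[OF H_cont conjunct1[OF L_lim[OF th]] _ evy]) (use Lb th in auto)
    have Hx: "((\<lambda>t. H (x t)) \<longlongrightarrow> H (x th)) (at_left th)"
      by (rule continuous_on_tendsto_compose[OF H_cont x_lim[OF th] _ evx]) (use xb th in auto)
    have l1: "((\<lambda>t. H (y t) - t * y t - (1 - \<alpha>) * u1 t) \<longlongrightarrow> H (L th) - th * L th - (1 - \<alpha>) * u1 th) (at_left th)"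
      by (intro tendsto_intros Hy conjunct1[OF L_lim[OF th]] IC_left_cont[OF IC1 mech1 th])
    have l2: "((\<lambda>t. H (x t) - t * x t - (1 - \<alpha>) * u t) \<longlongrightarrow> H (x th) - th * x th - (1 - \<alpha>) * u th) (at_left th)"
      by (intro tendsto_intros Hx x_lim[OF th] IC_left_cont[OF ICM mechM th])
    have ev: "\<forall>\<^sub>F t in at_left th. H (x t) - t * x t - (1 - \<alpha>) * u t \<le> H (y t) - t * y t - (1 - \<alpha>) * u1 t"
      by (rule eventually_at_leftI[of tlo]) (use pw th in auto)
    show ?thesis by (rule tendsto_le[OF _ l1 l2 ev]) simp
  qed
  define X where "X t = min (x t) (L t)" for t
  define Q where "Q t = (if X t = 0 then 0 else max (X t) qh)" for t
  define R where "R t = (if X t = 0 then 0 else X t / max (X t) qh)" for t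
  define U where "U t = integral {t..thi} X" for t
  have XQR: "Q t * R t = X t" for t
    unfolding Q_def R_def using qh_pos by (auto simp: max_def)
  have Xb: "0 \<le> X t \<and> X t \<le> x t \<and> X t \<le> L t \<and> X t \<le> qbar" if t: "t \<in> {tlo..thi}" for t
    using xb[OF t] Lb[OF t] unfolding X_def by auto
  have Xa: "X t \<le> X s" if st: "tlo \<le> s" "s \<le> t" "t \<le> thi" for s t
    using xa[OF st] L_anti[OF st] unfolding X_def by auto
  have Xtlo: "X tlo = x tlo" unfolding X_def L_def by auto
  have X_int: "X integrable_on {s..t}" if "tlo \<le> s" "t \<le> thi" for s t
    by (rule antimono_integrable) (use that Xa in auto)
  have x_int: "x integrable_on {s..t}" if "tlo \<le> s" "t \<le> thi" for s t
    by (rule antimono_integrable) (use that xa in auto)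
  have U_le_u: "U t \<le> u t" if t: "t \<in> {tlo..thi}" for t
  proof -
    have "integral {t..thi} X \<le> integral {t..thi} x"
      by (rule integral_le) (use X_int x_int t Xb in auto)
    then show ?thesis using u_int[OF t] unfolding U_def by simp
  qed
  have U_le_L: "U t \<le> integral {t..thi} L" if t: "t \<in> {tlo..thi}" for t
    unfolding U_def by (rule integral_le) (use X_int L_int t Xb in auto)
  have Ub: "U thi = 0" unfolding U_def by simp
  have Udiff: "U s - U t = integral {s..t} X" if st: "tlo \<le> s" "s \<le> t" "t \<le> thi" for s t
  proof -
    have "integral {s..t} X + integral {t..thi} X = integral {s..thi} X"
      by (rule Henstock_Kurzweil_Integration.integral_combine) (use st X_int in auto)
    then show ?thesis unfolding U_def by simp
  qed
  have UB: "(t - s) * X t \<le> U s - U t \<and> U s - U t \<le> (t - s) * X s" if st: "tlo \<le> s" "s \<le> t" "t \<le> thi" for s t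
    using Udiff[OF st] antimono_integral_bounds[where f = X and p = tlo and q = thi, OF _ st] Xa by auto
  have TriX: "(qh \<le> Q t \<and> R t = 1) \<or> (Q t = qh \<and> 0 < R t \<and> R t < 1) \<or> (Q t = 0 \<and> R t = 0)"
    if t: "t \<in> {tlo..thi}" for t
  proof -
    consider "X t = 0" | "qh \<le> X t" | "0 < X t" "X t < qh" using Xb[OF t] by fastforce
    then show ?thesis
    proof cases
      case 1 then show ?thesis unfolding Q_def R_def by simp
    next
      case 2 then show ?thesis unfolding Q_def R_def using qh_pos by (simp add: max_def)
    next
      case 3 then show ?thesis unfolding Q_def R_def using qh_pos by (simp add: max_def)
    qed
  qed
  have RSX: "RS P c \<alpha> t R Q U = H (X t) - t * X t - (1 - \<alpha>) * U t" if t: "t \<in> {tlo..thi}" for t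
    using G2[OF TriX[OF t], of t] XQR[of t] unfolding RS_def by simp
  have mechX: "mechanism tlo thi qbar R Q U"
    unfolding mechanism_def
  proof
    fix t assume t: "t \<in> {tlo..thi}"
    show "0 \<le> R t \<and> R t \<le> 1 \<and> 0 \<le> Q t \<and> Q t \<le> qbar \<and> (Q t = 0) = (R t = 0)"
      using TriX[OF t] Xb[OF t] qh_le_qbar qh_pos XQR[of t] by (auto simp: Q_def)
  qed
  have ICX: "IC tlo thi R Q U"
    unfolding IC_def
  proof (intro ballI)
    fix s t assume s: "s \<in> {tlo..thi}" and t: "t \<in> {tlo..thi}"
    have e: "(t - s) * Q t * R t = (t - s) * X t" using XQR[of t] by (simp add: algebra_simps)
    show "U t + (t - s) * Q t * R t \<le> U s"
    proof (cases "s \<le> t")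
      case True
      then have "U t + (t - s) * X t \<le> U s" using UB[of s t] s t by auto
      then show ?thesis using e by linarith
    next
      case False
      then have "U s - U t \<ge> - ((s - t) * X t)" using UB[of t s] s t by auto
      moreover have "(t - s) * X t = - ((s - t) * X t)" by (simp add: algebra_simps)
      ultimately show ?thesis using e by linarith
    qed
  qed
  have IRX: "IR tlo thi U"
    unfolding IR_def U_def
  proof
    fix t assume t: "t \<in> {tlo..thi}"
    show "0 \<le> integral {t..thi} X" by (rule integral_nonneg) (use X_int t Xb in auto)
  qed
  have feasX: "feasible tlo thi qbar R Q U" using mechX ICX IRX unfolding feasible_def by auto
  have FRX: "floor_randomized tlo thi qbar P c R Q U"
    unfolding floor_randomized_def
  proof (intro conjI feasX Ub)
    define T1 where "T1 = {t \<in> {tlo..thi}. qh \<le> X t}"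
    define T01 where "T01 = {t \<in> {tlo..thi}. 0 < X t \<and> X t < qh}"
    define T0 where "T0 = {t \<in> {tlo..thi}. X t = 0}"
    have Xa': "X z \<le> X w" if "w \<in> {tlo..thi}" "z \<in> {tlo..thi}" "w \<le> z" for w z
      using Xa that by auto
    show "\<exists>T1 T01 T0.
        interval_set T1 \<and> interval_set T01 \<and> interval_set T0 \<and>
        T1 \<inter> T01 = {} \<and> T1 \<inter> T0 = {} \<and> T01 \<inter> T0 = {} \<and>
        T1 \<union> T01 \<union> T0 = {tlo..thi} \<and>
        (\<forall>x\<in>T0. \<forall>y\<in>T01. x > y) \<and> (\<forall>x\<in>T01. \<forall>y\<in>T1. x > y) \<and>
        (\<forall>\<theta>\<in>T1. Q \<theta> \<ge> qfloor P c \<and> R \<theta> = 1) \<and>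
        (\<forall>\<theta>\<in>T01. Q \<theta> = qfloor P c \<and> 0 < R \<theta> \<and> R \<theta> < 1) \<and>
        (\<forall>\<theta>\<in>T0. Q \<theta> = 0 \<and> R \<theta> = 0)"
    proof (intro exI conjI)
      show "interval_set T1" unfolding interval_set_def T1_def
        using Xa' by (auto intro: order_trans)
      show "interval_set T01" unfolding interval_set_def
      proof (intro ballI allI impI)
        fix w v z assume w: "w \<in> T01" and v: "v \<in> T01" and z: "w \<le> z \<and> z \<le> v"
        have zr: "z \<in> {tlo..thi}" using w v z unfolding T01_def by auto
        have "X z \<le> X w" "X v \<le> X z" using Xa'[of w z] Xa'[of z v] w v z zr unfolding T01_def by auto
        then show "z \<in> T01" using w v zr unfolding T01_def by auto
      qed
      show "interval_set T0" unfolding interval_set_def T0_def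
        using Xa' Xb by (smt (verit) atLeastAtMost_iff mem_Collect_eq)
      show "T1 \<inter> T01 = {}" "T1 \<inter> T0 = {}" "T01 \<inter> T0 = {}"
        unfolding T1_def T01_def T0_def using qh_pos by auto
      show "T1 \<union> T01 \<union> T0 = {tlo..thi}"
        unfolding T1_def T01_def T0_def using Xb by force
      show "\<forall>x\<in>T0. \<forall>y\<in>T01. x > y" unfolding T0_def T01_def
        using Xa' by (metis (mono_tags, lifting) mem_Collect_eq not_le order_less_le_trans order_less_irrefl)
      show "\<forall>x\<in>T01. \<forall>y\<in>T1. x > y" unfolding T1_def T01_def
        using Xa' by (metis (mono_tags, lifting) mem_Collect_eq not_le order_less_le_trans order_less_irrefl)
      show "\<forall>\<theta>\<in>T1. Q \<theta> \<ge> qfloor P c \<and> R \<theta> = 1"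
        unfolding T1_def Q_def R_def qfloor_eq using qh_pos by (auto simp: max_def)
      show "\<forall>\<theta>\<in>T01. Q \<theta> = qfloor P c \<and> 0 < R \<theta> \<and> R \<theta> < 1"
        unfolding T01_def Q_def R_def qfloor_eq using qh_pos by (auto simp: max_def)
      show "\<forall>\<theta>\<in>T0. Q \<theta> = 0 \<and> R \<theta> = 0"
        unfolding T0_def Q_def R_def by auto
    qed
  qed
  have LCX: "left_continuous tlo thi R Q"
    unfolding left_continuous_def
  proof
    fix th assume "th \<in> {tlo<..thi}"
    then have th: "tlo < th" "th \<le> thi" by auto
    have "(X \<longlongrightarrow> X th) (at_left th)"
      unfolding X_def by (intro tendsto_min x_lim[OF th] conjunct2[OF L_lim[OF th]])
    then show "continuous (at_left th) (\<lambda>t. Q t * R t)"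
      unfolding XQR by (simp add: continuous_within)
  qed
  have xtlo: "x tlo = qeff P tlo" and qtlo: "q tlo = x tlo"
  proof -
    have "q tlo > qh" using DDM(2) qh_le_e[of tlo] assms(2) by auto
    then have "r tlo = 1" using Tri[of tlo] assms(2) qh_pos by auto
    then show "q tlo = x tlo" unfolding x_def by simp
    then show "x tlo = qeff P tlo" using DDM(2) by simp
  qed
  have Q_le_q: "Q t \<le> q t" if t: "t \<in> {tlo..thi}" for t
  proof -
    consider "X t = 0" | "qh \<le> X t" | "0 < X t" "X t < qh" using Xb[OF t] by fastforce
    then show ?thesis
    proof cases
      case 1 then show ?thesis unfolding Q_def using mech_x[OF mechM, of t] t by auto
    next
      case 2 then show ?thesis unfolding Q_def using Xb[OF t] xb[OF t] qh_pos by (auto simp: max_def)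
    next
      case 3
      have "x t > 0" using 3 Xb[OF t] by auto
      then have "q t \<noteq> 0" unfolding x_def by auto
      then have "qh \<le> q t" using Tri[OF t] by auto
      then show ?thesis unfolding Q_def using 3 by (auto simp: max_def)
    qed
  qed
  have DDX: "DD tlo thi P Q"
    unfolding DD_def
  proof
    show "\<forall>t\<in>{tlo..thi}. Q t \<le> qeff P t" using Q_le_q DDM(1) by (meson order_trans)
    have "qh \<le> x tlo" using xtlo qh_le_e[of tlo] assms(2) by auto
    then show "Q tlo = qeff P tlo" unfolding Q_def using Xtlo xtlo qh_pos by (auto simp: max_def)
  qed
  have geX: "RS P c \<alpha> t R Q U \<ge> RS P c \<alpha> t r q u" if t: "t \<in> {tlo..thi}" for t
  proof (cases "X t = x t")
    case True
    have "(1 - \<alpha>) * U t \<le> (1 - \<alpha>) * u t" using U_le_u[OF t] assms(10) by (intro mult_left_mono) auto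
    then show ?thesis using RSX[OF t] RSM[OF t] True by simp
  next
    case False
    then have XL: "X t = L t" unfolding X_def by (auto simp: min_def)
    have tg: "tlo < t" using False Xtlo t by (cases "t = tlo") auto
    have "u1 thi \<ge> 0" using IR1 assms(2) unfolding IR_def by auto
    then have "U t \<le> u1 t" using U_le_L[OF t] u1_int[OF t] by linarith
    then have "(1 - \<alpha>) * U t \<le> (1 - \<alpha>) * u1 t" using assms(10) by (intro mult_left_mono) auto
    then show ?thesis using RSX[OF t] RSM[OF t] XL F6[of t] tg t by auto
  qed
  have u1b: "u1 thi \<ge> 0" using IR1 assms(2) unfolding IR_def by auto
  have am: "0 < 1 - \<alpha>" using assms(10) by simp
  have tl: "tlo \<in> {tlo..thi}" using assms(2) by auto
  have strictX: "\<exists>\<theta>\<in>{tlo..thi}. RS P c \<alpha> \<theta> R Q U > RS P c \<alpha> \<theta> r q u"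
  proof (rule ccontr)
    assume nst: "\<not> (\<exists>\<theta>\<in>{tlo..thi}. RS P c \<alpha> \<theta> R Q U > RS P c \<alpha> \<theta> r q u)"
    have "RS P c \<alpha> tlo R Q U \<le> RS P c \<alpha> tlo r q u" using nst tl by (meson not_less)
    then have "(1 - \<alpha>) * u tlo \<le> (1 - \<alpha>) * U tlo" using RSX[OF tl] RSM[OF tl] Xtlo by simp
    then have "u tlo \<le> U tlo" using am by (simp add: mult_le_cancel_left_pos)
    then have Utlo: "U tlo = u tlo" using U_le_u[OF tl] by simp
    have G5a: "H (y tlo) - tlo * y tlo \<le> H (x tlo) - tlo * x tlo" using G5[of tlo "y tlo"] xtlo assms(2) by auto
    have "(1 - \<alpha>) * u1 tlo \<le> (1 - \<alpha>) * u tlo" using pw[OF tl] G5a by linarith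
    then have u1u: "u1 tlo \<le> u tlo" using am by (simp add: mult_le_cancel_left_pos)
    have intL: "integral {tlo..thi} L \<le> u1 tlo" using u1_int[OF tl] u1b by linarith
    have XLint: "integral {tlo..thi} X \<le> integral {tlo..thi} L"
      by (rule integral_le) (use X_int L_int Xb in auto)
    obtain th0 where th0: "th0 \<in> {tlo..thi}" "RS P c \<alpha> th0 r1 q1 u1 > RS P c \<alpha> th0 r q u"
      using strict by auto
    show False
    proof (cases "th0 = tlo")
      case True
      then have "H (x tlo) - tlo * x tlo - (1 - \<alpha>) * u tlo < H (y tlo) - tlo * y tlo - (1 - \<alpha>) * u1 tlo"
        using th0 RS1[OF tl] RSM[OF tl] by auto
      then have "(1 - \<alpha>) * u1 tlo < (1 - \<alpha>) * u tlo" using G5a by linarith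
      then have "u1 tlo < u tlo" using am by (simp add: mult_less_cancel_left_pos)
      then show False using intL XLint Utlo unfolding U_def by linarith
    next
      case False
      then have tg: "tlo < th0" "th0 \<le> thi" using th0 by auto
      have xXi: "(\<lambda>t. x t - X t) integrable_on {tlo..thi}" using x_int X_int by (intro integrable_diff) auto
      have "integral {tlo..thi} (\<lambda>t. x t - X t) = integral {tlo..thi} x - integral {tlo..thi} X"
        using x_int X_int by (intro integral_diff) auto
      then have dint: "integral {tlo..thi} (\<lambda>t. x t - X t) = 0" using u_int[OF tl] Utlo unfolding U_def by simp
      have "integral {th0..thi} (\<lambda>t. x t - X t) \<le> integral {tlo..thi} (\<lambda>t. x t - X t)"
        by (rule integral_sub_le[OF xXi]) (use Xb tg in auto)
      moreover have "integral {th0..thi} (\<lambda>t. x t - X t) = integral {th0..thi} x - integral {th0..thi} X"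
        using x_int X_int tg by (intro integral_diff) auto
      ultimately have "u th0 \<le> U th0" using dint u_int[OF th0(1)] unfolding U_def by simp
      moreover have "U th0 \<le> u1 th0" using U_le_L[OF th0(1)] u1_int[OF th0(1)] u1b by linarith
      ultimately have "(1 - \<alpha>) * u th0 \<le> (1 - \<alpha>) * u1 th0" using am by (intro mult_left_mono) auto
      then have Hlt: "H (x th0) - th0 * x th0 < H (y th0) - th0 * y th0"
        using th0 RS1[OF th0(1)] RSM[OF th0(1)] by linarith
      have yx: "y th0 > x th0"
      proof (rule ccontr)
        assume "\<not> y th0 > x th0"
        moreover have "x th0 \<le> qeff P th0" using xb[OF th0(1)] DDM(1)[OF th0(1)] by auto
        ultimately have "H (y th0) - th0 * y th0 \<le> H (x th0) - th0 * x th0"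
          using G4[of th0 "y th0" "x th0"] tg by auto
        then show False using Hlt by simp
      qed
      then have Lx: "L th0 - x th0 > 0" using L_ge_y[OF th0(1)] by simp
      define \<epsilon> where "\<epsilon> = (L th0 - x th0) / 2"
      have ep: "\<epsilon> > 0" "\<epsilon> < L th0 - x th0" using Lx unfolding \<epsilon>_def by auto
      have "((\<lambda>t. L t - x t) \<longlongrightarrow> L th0 - x th0) (at_left th0)"
        by (intro tendsto_diff conjunct2[OF L_lim[OF tg]] x_lim[OF tg])
      then have "\<forall>\<^sub>F t in at_left th0. \<epsilon> < L t - x t" by (rule order_tendstoD(1)) (use ep in auto)
      then obtain b0 where b0: "b0 < th0" "\<And>t. t > b0 \<Longrightarrow> t < th0 \<Longrightarrow> \<epsilon> < L t - x t"
        unfolding eventually_at_left_field by blast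
      define s0 where "s0 = max ((b0 + th0) / 2) tlo"
      have "b0 < (b0 + th0) / 2" "(b0 + th0) / 2 < th0" using b0 by auto
      then have s0: "tlo \<le> s0" "s0 < th0" "b0 < s0" using tg unfolding s0_def by (auto simp: less_max_iff_disj)
      have pos: "\<epsilon> \<le> L t - X t" if t: "t \<in> {s0..th0}" for t
      proof (cases "t = th0")
        case True then show ?thesis using ep unfolding X_def by auto
      next
        case False
        then have "\<epsilon> < L t - x t" using b0(2)[of t] t s0 by auto
        then show ?thesis unfolding X_def by auto
      qed
      have LXi: "(\<lambda>t. L t - X t) integrable_on {tlo..thi}" using L_int X_int by (intro integrable_diff) auto
      have "integral {s0..th0} (\<lambda>_. \<epsilon>) \<le> integral {s0..th0} (\<lambda>t. L t - X t)"
        by (rule integral_le) (use pos integrable_subinterval_real[OF LXi] s0 tg in auto)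
      moreover have "integral {s0..th0} (\<lambda>t. L t - X t) \<le> integral {tlo..thi} (\<lambda>t. L t - X t)"
        by (rule integral_sub_le[OF LXi]) (use Xb s0 tg in auto)
      moreover have "integral {tlo..thi} (\<lambda>t. L t - X t) = integral {tlo..thi} L - integral {tlo..thi} X"
        using L_int X_int by (intro integral_diff) auto
      moreover have "integral {tlo..thi} L \<le> integral {tlo..thi} X"
        using intL u1u Utlo unfolding U_def by linarith
      ultimately have "(th0 - s0) * \<epsilon> \<le> 0" using s0 by simp
      moreover have "(th0 - s0) * \<epsilon> > 0" using s0 ep by simp
      ultimately show False by simp
    qed
  qed
  show ?thesis
  proof (intro exI conjI)
    show "floor_randomized tlo thi qbar P c R Q U" by (rule FRX)
    show "left_continuous tlo thi R Q" by (rule LCX)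
    show "DD tlo thi P Q" by (rule DDX)
    show "dominates tlo thi qbar P c \<alpha> R Q U r q u"
      unfolding dominates_def using feasX feas geX strictX by auto
    show "\<forall>\<theta>\<in>{tlo..thi}. Q \<theta> * R \<theta> \<le> q \<theta> * r \<theta>"
      using XQR Xb unfolding x_def by auto
  qed
qed


end
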